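(* Let $\lambda\in\mathbb R$ with $\alpha=1-\lambda>0$, and let $\mathcal Q_\lambda$ be a $\lambda$-exponential family whose $\lambda$-log-partition function $\varphi_\lambda$ is proper. Let $N>1$, let $\bar T_1,\dots,\bar T_N\in\mathcal H$ be such that $c_\lambda(\vartheta,\bar T_i)\in\mathbb R$ for all $i$ and all $\vartheta\in\operatorname{dom}\varphi_\lambda$, and let $\rho_1,\dots,\rho_N\ge0$ with $\sum_i\rho_i=1$. Suppose there exists $\vartheta_*\in\operatorname{dom}\varphi_\lambda$ with $\sum_{i=1}^N\rho_i\bar T_i\in\partial^{c_\lambda}\varphi_\lambda(\vartheta_* )$. (i) If $\lambda=0$, $\vartheta_*$ minimizes $\vartheta\mapsto\varphi_\lambda(\vartheta)-\sum_i\rho_ic_\lambda(\vartheta,\bar T_i)$ over $\operatorname{dom}\varphi_\lambda$. (ii) If $\lambda<0$, $\vartheta_*$ minimizes $\vartheta\mapsto\varphi_\lambda(\vartheta)-c_\lambda(\vartheta,\sum_i\rho_i\bar T_i)$ over $\operatorname{dom}\varphi_\lambda$, and this function is an upper bound of $\vartheta\mapsto\varphi_\lambda(\vartheta)-\sum_i\rho_ic_\lambda(\vartheta,\bar T_i)$ on $\operatorname{dom}\varphi_\lambda$. Moreover $\varphi_\lambda(\vartheta_* )-\sum_i\rho_ic_\lambda(\vartheta_*,\bar T_i)\le-\varphi_\lambda^{c_\lambda}(\sum_i\rho_i\bar T_i)$. (iii) If $\lambda>0$, $\vartheta_*$ minimizes $\vartheta\mapsto\varphi_\lambda(\vartheta)-c_\lambda(\vartheta,\sum_i\rho_i\bar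 T_i)$ over $\operatorname{dom}\varphi_\lambda$, and this function is a lower bound of $\vartheta\mapsto\varphi_\lambda(\vartheta)-\sum_i\rho_ic_\lambda(\vartheta,\bar T_i)$ on $\operatorname{dom}\varphi_\lambda$. Moreover $-\varphi_\lambda^{c_\lambda}(\sum_i\rho_i\bar T_i)\le\varphi_\lambda(\vartheta)-\sum_i\rho_ic_\lambda(\vartheta,\bar T_i)$ for all $\vartheta\in\operatorname{dom}\varphi_\lambda$.
   Context: $\mathcal H$ is a finite-dimensional real Hilbert space; $\mathcal X$ a measurable space with measure $m$; $T:\mathcal X\to\mathcal H$ measurable. Conventions $\log s=-\infty$ for $s\le0$, $\exp(-\infty)=0$. Coupling: $c_\lambda(u,v)=\frac1\lambda\log(1+\lambda\langle u,v\rangle)$ for $\lambda\ne0$, $c_0(u,v)=\langle u,v\rangle$. $\varphi_\lambda(\vartheta)=\log\int\exp(c_\lambda(\vartheta,T(x)))m(dx)$, $\operatorname{dom}\varphi_\lambda=\{\vartheta:\varphi_\lambda(\vartheta)<+\infty\}$, $q_\vartheta=\exp(c_\lambda(\vartheta,T)-\varphi_\lambda(\vartheta))$, $\mathcal Q_\lambda=\{q_\vartheta:\vartheta\in\operatorname{dom}\varphi_\lambda\}$; proper means $\varphi_\lambda>-\infty$ everywhere and $\operatorname{dom}\varphi_\lambda\ne\emptyset$. For proper $f:\mathcal H\to\bar{\mathbb R}$: $f^{c_\lambda}(v)=\sup_{u\in\mathcal H}c_\lambda(u,v)-f(u)$, and $v\in\partial^{c_\lambda}f(u)$ iff $f^{c_\lambda}(v)+f(u)=c_\lambda(u,v)$.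 *)

theory Defs
  imports "HOL-Analysis.Analysis" "HOL-Probability.Probability"
begin

definition elog :: "ennreal \<Rightarrow> ereal" where
  "elog s = (if s = 0 then - \<infinity> else if s = \<top> then \<infinity> else ereal (ln (enn2real s)))"

definition eexp :: "ereal \<Rightarrow> ennreal" where
  "eexp t = (if t = - \<infinity> then 0 else if t = \<infinity> then \<top> else ennreal (exp (real_of_ereal t)))"

text \<open>The coupling c_lambda(u,v) = (1/lambda) log(1 + lambda <u,v>), c_0(u,v) = <u,v>,
  with the convention log s = -infinity for s <= 0.\<close>
definition coupling :: "real \<Rightarrow> 'h::real_inner \<Rightarrow> 'h \<Rightarrow> ereal" where
  "coupling lam u v =
     (if lam = 0 then ereal (inner u v)
      else if 1 + lam * inner u v \<le> 0 then ereal (1 / lam) * (- \<infinity>)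
      else ereal (ln (1 + lam * inner u v) / lam))"

definition logpart :: "real \<Rightarrow> 'x measure \<Rightarrow> ('x \<Rightarrow> 'h::real_inner) \<Rightarrow> 'h \<Rightarrow> ereal" where
  "logpart lam M T \<theta> = elog (\<integral>\<^sup>+ x. eexp (coupling lam \<theta> (T x)) \<partial>M)"

definition edom :: "('h \<Rightarrow> ereal) \<Rightarrow> 'h set" where
  "edom f = {u. f u < \<infinity>}"

definition proper_fun :: "('h \<Rightarrow> ereal) \<Rightarrow> bool" where
  "proper_fun f \<longleftrightarrow> (\<forall>u. f u > - \<infinity>) \<and> edom f \<noteq> {}"

text \<open>c_lambda-conjugate: sup over u of c(u,v) - f(u); points with f(u) = +infinity
  contribute -infinity (they are excluded), so the sup is taken over dom f.\<close>
definition cconj :: "real \<Rightarrow> ('h::real_inner \<Rightarrow> ereal) \<Rightarrow> 'h \<Rightarrow> ereal" where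
  "cconj lam f v = (SUP u \<in> edom f. coupling lam u v - f u)"

definition csubdiff :: "real \<Rightarrow> ('h::real_inner \<Rightarrow> ereal) \<Rightarrow> 'h \<Rightarrow> 'h set" where
  "csubdiff lam f u = {v. cconj lam f v + f u = coupling lam u v}"

end

theory Submission
  imports Defs
begin

lemma ln_jensen_aux:
  fixes rho x :: "nat \<Rightarrow> real"
  assumes fI: "finite I" and nn: "\<And>i. i \<in> I \<Longrightarrow> rho i \<ge> 0" and s1: "sum rho I = 1"
    and xp: "\<And>i. i \<in> I \<Longrightarrow> x i > 0"
  shows "(\<Sum>i\<in>I. rho i * ln (x i)) \<le> ln (\<Sum>i\<in>I. rho i * x i)"
proof -
  define m where "m = (\<Sum>i\<in>I. rho i * x i)"
  obtain j where j: "j \<in> I" "rho j \<noteq> 0"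
    using s1 by (metis sum.neutral zero_neq_one)
  have "rho j * x j > 0" using j nn[of j] xp[of j] by simp
  moreover have "rho j * x j \<le> m" unfolding m_def
    using fI j nn xp by (intro member_le_sum) (auto intro: mult_nonneg_nonneg less_imp_le)
  ultimately have mp: "m > 0" by linarith
  have "\<And>i. i \<in> I \<Longrightarrow> rho i * ln (x i) \<le> rho i * (ln m + x i / m - 1)"
  proof -
    fix i assume i: "i \<in> I"
    have "ln (x i / m) \<le> x i / m - 1" using xp[OF i] mp by (intro ln_le_minus_one) simp
    then have "ln (x i) \<le> ln m + x i / m - 1" using xp[OF i] mp by (simp add: ln_div)
    then show "rho i * ln (x i) \<le> rho i * (ln m + x i / m - 1)"
      using nn[OF i] by (simp add: mult_left_mono)
  qed
  then have "(\<Sum>i\<in>I. rho i * ln (x i)) \<le> (\<Sum>i\<in>I. rho i * (ln m + x i / m - 1))"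
    by (rule sum_mono)
  also have "\<dots> = ln m * sum rho I + (\<Sum>i\<in>I. rho i * x i) / m - sum rho I"
    by (simp add: algebra_simps sum.distrib sum_subtractf sum_distrib_left sum_divide_distrib)
  also have "\<dots> = ln m" using s1 mp by (simp add: m_def[symmetric])
  finally show ?thesis by (simp add: m_def)
qed

lemma coupling_pos:
  assumes "lam \<noteq> 0" "\<bar>coupling lam u v\<bar> \<noteq> \<infinity>"
  shows "1 + lam * inner u v > 0"
proof (rule ccontr)
  assume "\<not> ?thesis"
  then have "coupling lam u v = ereal (1/lam) * (-\<infinity>)" using assms(1) by (simp add: coupling_def)
  moreover have "1/lam \<noteq> 0" using assms(1) by simp
  ultimately have "\<bar>coupling lam u v\<bar> = \<infinity>"
    by (cases "1/lam > 0") auto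
  then show False using assms(2) by simp
qed

lemma coupling_val:
  assumes "lam \<noteq> 0" "1 + lam * inner u v > 0"
  shows "coupling lam u v = ereal (ln (1 + lam * inner u v) / lam)"
  using assms by (simp add: coupling_def)

lemma coupling_sum:
  fixes Tb :: "nat \<Rightarrow> 'h::real_inner"
  assumes fI: "finite I" and nn: "\<And>i. i \<in> I \<Longrightarrow> rho i \<ge> 0" and s1: "sum rho I = 1"
    and lam: "lam \<noteq> 0"
    and fin: "\<And>i. i \<in> I \<Longrightarrow> \<bar>coupling lam u (Tb i)\<bar> \<noteq> \<infinity>"
  shows "(lam > 0 \<longrightarrow> (\<Sum>i\<in>I. ereal (rho i) * coupling lam u (Tb i)) \<le> coupling lam u (\<Sum>i\<in>I. rho i *\<^sub>R Tb i))
       \<and> (lam < 0 \<longrightarrow> (\<Sum>i\<in>I. ereal (rho i) * coupling lam u (Tb i)) \<ge> coupling lam u (\<Sum>i\<in>I. rho i *\<^sub>R Tb i))"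
proof -
  define x where "x i = 1 + lam * inner u (Tb i)" for i
  have xp: "\<And>i. i \<in> I \<Longrightarrow> x i > 0" unfolding x_def using coupling_pos[OF lam fin] by blast
  have sx: "(\<Sum>i\<in>I. rho i * x i) = 1 + lam * inner u (\<Sum>i\<in>I. rho i *\<^sub>R Tb i)"
    unfolding x_def by (simp add: inner_sum_right algebra_simps sum.distrib sum_distrib_left s1)
  have J: "(\<Sum>i\<in>I. rho i * ln (x i)) \<le> ln (\<Sum>i\<in>I. rho i * x i)"
    by (rule ln_jensen_aux[OF fI nn s1 xp])
  have pos: "(\<Sum>i\<in>I. rho i * x i) > 0"
  proof -
    obtain j where j: "j \<in> I" "rho j \<noteq> 0"
      using s1 by (metis sum.neutral zero_neq_one)
    have "rho j * x j > 0" using j nn[of j] xp[of j] by simp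
    moreover have "rho j * x j \<le> (\<Sum>i\<in>I. rho i * x i)"
      using fI j nn xp by (intro member_le_sum) (auto intro: mult_nonneg_nonneg less_imp_le)
    ultimately show ?thesis by linarith
  qed
  have L: "(\<Sum>i\<in>I. ereal (rho i) * coupling lam u (Tb i)) = ereal ((\<Sum>i\<in>I. rho i * ln (x i)) / lam)"
  proof -
    have "(\<Sum>i\<in>I. ereal (rho i) * coupling lam u (Tb i)) = (\<Sum>i\<in>I. ereal (rho i * ln (x i) / lam))"
      by (rule sum.cong) (auto simp: coupling_val[OF lam] xp[unfolded x_def] x_def)
    also have "\<dots> = ereal ((\<Sum>i\<in>I. rho i * ln (x i)) / lam)" by (simp add: sum_divide_distrib)
    finally show ?thesis .
  qed
  have R: "coupling lam u (\<Sum>i\<in>I. rho i *\<^sub>R Tb i) = ereal (ln (\<Sum>i\<in>I. rho i * x i) / lam)"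
    using coupling_val[OF lam] pos sx by simp
  show ?thesis unfolding L R using J
    by (auto simp: divide_right_mono divide_right_mono_neg)
qed

theorem proposition6:
  fixes lam :: real and M :: "'x measure" and T :: "'x \<Rightarrow> 'h::euclidean_space"
    and N :: nat and Tb :: "nat \<Rightarrow> 'h" and rho :: "nat \<Rightarrow> real" and \<theta>s :: 'h
  assumes alpha: "1 - lam > 0"
    and T_meas: "T \<in> borel_measurable M"
    and proper: "proper_fun (logpart lam M T)"
    and N: "N > 1"
    and fin: "\<And>i \<theta>. i \<in> {1..N} \<Longrightarrow> \<theta> \<in> edom (logpart lam M T) \<Longrightarrow>
               \<bar>coupling lam \<theta> (Tb i)\<bar> \<noteq> \<infinity>"
    and rho_nn: "\<And>i. i \<in> {1..N} \<Longrightarrow> rho i \<ge> 0"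
    and rho_sum: "(\<Sum>i=1..N. rho i) = 1"
    and \<theta>s_dom: "\<theta>s \<in> edom (logpart lam M T)"
    and sub: "(\<Sum>i=1..N. rho i *\<^sub>R Tb i) \<in> csubdiff lam (logpart lam M T) \<theta>s"
  shows
    "(lam = 0 \<longrightarrow>
        (\<forall>\<theta> \<in> edom (logpart lam M T).
           logpart lam M T \<theta>s - (\<Sum>i=1..N. ereal (rho i) * coupling lam \<theta>s (Tb i))
           \<le> logpart lam M T \<theta> - (\<Sum>i=1..N. ereal (rho i) * coupling lam \<theta> (Tb i))))
     \<and> (lam < 0 \<longrightarrow>
        (\<forall>\<theta> \<in> edom (logpart lam M T).
           logpart lam M T \<theta>s - coupling lam \<theta>s (\<Sum>i=1..N. rho i *\<^sub>R Tb i)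
           \<le> logpart lam M T \<theta> - coupling lam \<theta> (\<Sum>i=1..N. rho i *\<^sub>R Tb i))
        \<and> (\<forall>\<theta> \<in> edom (logpart lam M T).
           logpart lam M T \<theta> - (\<Sum>i=1..N. ereal (rho i) * coupling lam \<theta> (Tb i))
           \<le> logpart lam M T \<theta> - coupling lam \<theta> (\<Sum>i=1..N. rho i *\<^sub>R Tb i))
        \<and> logpart lam M T \<theta>s - (\<Sum>i=1..N. ereal (rho i) * coupling lam \<theta>s (Tb i))
           \<le> - cconj lam (logpart lam M T) (\<Sum>i=1..N. rho i *\<^sub>R Tb i))
     \<and> (lam > 0 \<longrightarrow>
        (\<forall>\<theta> \<in> edom (logpart lam M T).
           logpart lam M T \<theta>s - coupling lam \<theta>s (\<Sum>i=1..N. rho i *\<^sub>R Tb i)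
           \<le> logpart lam M T \<theta> - coupling lam \<theta> (\<Sum>i=1..N. rho i *\<^sub>R Tb i))
        \<and> (\<forall>\<theta> \<in> edom (logpart lam M T).
           logpart lam M T \<theta> - coupling lam \<theta> (\<Sum>i=1..N. rho i *\<^sub>R Tb i)
           \<le> logpart lam M T \<theta> - (\<Sum>i=1..N. ereal (rho i) * coupling lam \<theta> (Tb i)))
        \<and> (\<forall>\<theta> \<in> edom (logpart lam M T).
           - cconj lam (logpart lam M T) (\<Sum>i=1..N. rho i *\<^sub>R Tb i)
           \<le> logpart lam M T \<theta> - (\<Sum>i=1..N. ereal (rho i) * coupling lam \<theta> (Tb i))))"
proof -
  let ?f = "logpart lam M T"
  let ?v = "\<Sum>i=1..N. rho i *\<^sub>R Tb i"
  have ffin: "\<And>\<theta>. \<theta> \<in> edom ?f \<Longrightarrow> \<bar>?f \<theta>\<bar> \<noteq> \<infinity>"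
    using proper unfolding proper_fun_def edom_def by force
  obtain s where s: "?f \<theta>s = ereal s" using ffin[OF \<theta>s_dom] by (cases "?f \<theta>s") auto
  have cc: "cconj lam ?f ?v = coupling lam \<theta>s ?v - ereal s"
  proof -
    have "cconj lam ?f ?v + ereal s = coupling lam \<theta>s ?v" using sub s by (simp add: csubdiff_def)
    moreover have "\<And>x y::ereal. x + ereal s = y \<Longrightarrow> x = y - ereal s"
      by (case_tac x; case_tac y) auto
    ultimately show ?thesis by blast
  qed
  have sup: "\<And>\<theta>. \<theta> \<in> edom ?f \<Longrightarrow> coupling lam \<theta> ?v - ?f \<theta> \<le> cconj lam ?f ?v"
    unfolding cconj_def by (rule SUP_upper)
  have minim: "\<And>\<theta>. \<theta> \<in> edom ?f \<Longrightarrow> ?f \<theta>s - coupling lam \<theta>s ?v \<le> ?f \<theta> - coupling lam \<theta> ?v"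
  proof -
    fix \<theta> assume th: "\<theta> \<in> edom ?f"
    obtain r where r: "?f \<theta> = ereal r" using ffin[OF th] by (cases "?f \<theta>") auto
    have "coupling lam \<theta> ?v - ereal r \<le> coupling lam \<theta>s ?v - ereal s" using sup[OF th] cc r by simp
    then show "?f \<theta>s - coupling lam \<theta>s ?v \<le> ?f \<theta> - coupling lam \<theta> ?v" unfolding r s
      by (cases "coupling lam \<theta> ?v"; cases "coupling lam \<theta>s ?v") auto
  qed
  have negcc: "- cconj lam ?f ?v = ?f \<theta>s - coupling lam \<theta>s ?v"
    unfolding cc s by (cases "coupling lam \<theta>s ?v") auto
  have J: "\<And>\<theta>. \<theta> \<in> edom ?f \<Longrightarrow> lam \<noteq> 0 \<Longrightarrow>
    (lam > 0 \<longrightarrow> (\<Sum>i=1..N. ereal (rho i) * coupling lam \<theta> (Tb i)) \<le> coupling lam \<theta> ?v)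
       \<and> (lam < 0 \<longrightarrow> (\<Sum>i=1..N. ereal (rho i) * coupling lam \<theta> (Tb i)) \<ge> coupling lam \<theta> ?v)"
    by (rule coupling_sum) (use rho_nn rho_sum fin in auto)
  have lin: "\<And>\<theta>. lam = 0 \<Longrightarrow> (\<Sum>i=1..N. ereal (rho i) * coupling lam \<theta> (Tb i)) = coupling lam \<theta> ?v"
    by (simp add: coupling_def inner_sum_right)
  have mono1: "\<And>\<theta> a b. \<theta> \<in> edom ?f \<Longrightarrow> a \<le> b \<Longrightarrow> ?f \<theta> - b \<le> ?f \<theta> - a"
  proof -
    fix \<theta> a b assume th: "\<theta> \<in> edom ?f" and ab: "(a::ereal) \<le> b"
    obtain r where r: "?f \<theta> = ereal r" using ffin[OF th] by (cases "?f \<theta>") auto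
    show "?f \<theta> - b \<le> ?f \<theta> - a" unfolding r using ab by (simp add: ereal_minus_mono)
  qed
  show ?thesis
  proof (intro conjI impI ballI)
    fix \<theta> assume "lam = 0" "\<theta> \<in> edom ?f"
    then show "?f \<theta>s - (\<Sum>i=1..N. ereal (rho i) * coupling lam \<theta>s (Tb i))
           \<le> ?f \<theta> - (\<Sum>i=1..N. ereal (rho i) * coupling lam \<theta> (Tb i))"
      using minim lin by simp
  next
    fix \<theta> assume "lam < 0" "\<theta> \<in> edom ?f"
    then show "?f \<theta>s - coupling lam \<theta>s ?v \<le> ?f \<theta> - coupling lam \<theta> ?v" using minim by simp
  next
    fix \<theta> assume "lam < 0" "\<theta> \<in> edom ?f"
    then show "?f \<theta> - (\<Sum>i=1..N. ereal (rho i) * coupling lam \<theta> (Tb i)) \<le> ?f \<theta> - coupling lam \<theta> ?v"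
      using J[of \<theta>] mono1 by simp
  next
    assume "lam < 0"
    then show "?f \<theta>s - (\<Sum>i=1..N. ereal (rho i) * coupling lam \<theta>s (Tb i)) \<le> - cconj lam ?f ?v"
      unfolding negcc using J[OF \<theta>s_dom] mono1[OF \<theta>s_dom] by simp
  next
    fix \<theta> assume "lam > 0" "\<theta> \<in> edom ?f"
    then show "?f \<theta>s - coupling lam \<theta>s ?v \<le> ?f \<theta> - coupling lam \<theta> ?v" using minim by simp
  next
    fix \<theta> assume "lam > 0" "\<theta> \<in> edom ?f"
    then show "?f \<theta> - coupling lam \<theta> ?v \<le> ?f \<theta> - (\<Sum>i=1..N. ereal (rho i) * coupling lam \<theta> (Tb i))"
      using J[of \<theta>] mono1 by simp
  next
    fix \<theta> assume a: "lam > 0" "\<theta> \<in> edom ?f"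
    have "- cconj lam ?f ?v \<le> ?f \<theta> - coupling lam \<theta> ?v" unfolding negcc using minim a by simp
    also have "\<dots> \<le> ?f \<theta> - (\<Sum>i=1..N. ereal (rho i) * coupling lam \<theta> (Tb i))"
      using J[of \<theta>] mono1 a by simp
    finally show "- cconj lam ?f ?v \<le> ?f \<theta> - (\<Sum>i=1..N. ereal (rho i) * coupling lam \<theta> (Tb i))" .
  qed
qed

end
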